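(* Assume the network $\Sigma$ is well-posed, let $\mathcal{A}\subset X$ be nonempty and closed, and assume $f:X\times U\to X$ is $\mathcal{K}$-bounded with respect to $\mathcal{A}$, i.e. there are $\kappa_1,\kappa_2\in\mathcal{K}$ with $|f(\xi,\mu)|_{\mathcal{A}}\le\kappa_1(|\xi|_{\mathcal{A}})+\kappa_2(|\mu|_\infty)$ for all $\xi\in X$, $\mu\in U$. If there exists a finite-step ISS Lyapunov function for $\Sigma$ with respect to $\mathcal{A}$, then $\Sigma$ is ISS with respect to $\mathcal{A}$. Additionally, if $\kappa_1$ is linear, the existence of a finite-step eISS Lyapunov function for $\Sigma$ with respect to $\mathcal{A}$ implies that $\Sigma$ is eISS with respect to $\mathcal{A}$.
   Context: Setting: for each $i\in\mathbb{N}$ fix positive integers $n_i,p_i$, norms on $\mathbb{R}^{n_i},\mathbb{R}^{p_i}$, a finite $I_i\subset\mathbb{N}\setminus\{i\}$ with each $\{j: i\in I_j\}$ finite, and continuous $f_i:\mathbb{R}^{n_i}\times\prod_{j\in I_i}\mathbb{R}^{n_j}\times\mathbb{R}^{p_i}\to\mathbb{R}^{n_i}$. $X$ (resp. $U$) is the space of sequences $(x_i)$, $x_i\in\mathbb{R}^{n_i}$ (resp. $(u_i)$, $u_i\in\mathbb{R}^{p_i}$) with finite sup-norm $|\cdot|_\infty$; $X_E=\prod_i\mathbb{R}^{n_i}$; $f(x,u)_i=f_i(x_i,(x_j)_{j\in I_i},u_i)$; network $\Sigma$: $x(k+1)=f(x(k),u(k))$. $\Sigma$ is well-posed if $f(X\times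 U)\subset X$. $\mathcal{U}$: sequences $u:\mathbb{N}_0\to U$ with $\|u\|_\infty=\sup_k|u(k)|_\infty<\infty$; $x(k,\xi,u)$ the solution with $x(0)=\xi$. $|x|_{\mathcal{A}}=\inf_{y\in\mathcal{A}}|x-y|_\infty$. ISS w.r.t. $\mathcal{A}$: there are $\beta\in\mathcal{KL}$, $\gamma\in\mathcal{K}$ with $|x(k,\xi,u)|_{\mathcal{A}}\le\max\{\beta(|\xi|_{\mathcal{A}},k),\gamma(\|u\|_\infty)\}$ for all $\xi\in X,u\in\mathcal{U},k\in\mathbb{N}_0$; eISS: additionally $\beta(r,k)=C\rho^kr$ with $C\ge1,\rho\in[0,1)$. A continuous $V:X\to[0,\infty)$ is a finite-step ISS Lyapunov function for $\Sigma$ w.r.t. $\mathcal{A}$ if there exist $M\in\mathbb{N}$, $\underline\omega,\overline\omega,\alpha\in\mathcal{K}_\infty$ with $\alpha(s)<s$ for all $s>0$, and $\gamma\in\mathcal{K}$ such that for all $\xi\in X$, $u\in\mathcal{U}$: $\underline\omega(|\xi|_{\mathcal{A}})\le V(\xi)\le\overline\omega(|\xi|_{\mathcal{A}})$ and $V(x(M,\xi,u))\le\max\{\alpha(V(\xi)),\gamma(\|u\|_\infty)\}$. It is a finite-step eISS Lyapunov function if there exist $M\in\mathbb{N}$, constants $\underline w,\overline w,b>0$, $\kappa\in[0,1)$, $\gamma\in\mathcal{K}$ with $\underline w|\xi|_{\mathcal{A}}^b\le V(\xi)\le\overline w|\xi|_{\mathcal{A}}^b$ and $V(x(M,\xi,u))\le\max\{\kappa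 V(\xi),\gamma(\|u\|_\infty)\}$ for all $\xi\in X,u\in\mathcal{U}$. Comparison classes $\mathcal{K},\mathcal{K}_\infty,\mathcal{KL}$ are standard. *)

theory Defs
  imports "HOL-Analysis.Analysis"
begin

text \<open>Vectors in R^d are encoded as functions nat => real vanishing at all coordinates >= d.
  A state of the network is a sequence (nat => (nat => real)) of such vectors.\<close>

definition Vsp :: "nat \<Rightarrow> (nat \<Rightarrow> real) set" where
  "Vsp d = {v. \<forall>k\<ge>d. v k = 0}"

definition is_norm_on :: "(nat \<Rightarrow> real) set \<Rightarrow> ((nat \<Rightarrow> real) \<Rightarrow> real) \<Rightarrow> bool" where
  "is_norm_on S N \<longleftrightarrow>
     (\<forall>v\<in>S. 0 \<le> N v \<and> (N v = 0 \<longleftrightarrow> v = (\<lambda>k. 0))) \<and>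
     (\<forall>v\<in>S. \<forall>c. N (\<lambda>k. c * v k) = \<bar>c\<bar> * N v) \<and>
     (\<forall>v\<in>S. \<forall>w\<in>S. N (\<lambda>k. v k + w k) \<le> N v + N w)"

definition seqsp :: "(nat \<Rightarrow> nat) \<Rightarrow> (nat \<Rightarrow> (nat \<Rightarrow> real) \<Rightarrow> real) \<Rightarrow> (nat \<Rightarrow> nat \<Rightarrow> real) set" where
  "seqsp d N = {x. (\<forall>i. x i \<in> Vsp (d i)) \<and> bdd_above (range (\<lambda>i. N i (x i)))}"

definition supn :: "(nat \<Rightarrow> (nat \<Rightarrow> real) \<Rightarrow> real) \<Rightarrow> (nat \<Rightarrow> nat \<Rightarrow> real) \<Rightarrow> real" where
  "supn N x = (SUP i. N i (x i))"

definition nbr_dom :: "(nat \<Rightarrow> nat set) \<Rightarrow> (nat \<Rightarrow> nat) \<Rightarrow> nat \<Rightarrow> (nat \<Rightarrow> nat \<Rightarrow> real) set" where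
  "nbr_dom I d i = {y. \<forall>j. (j \<in> I i \<longrightarrow> y j \<in> Vsp (d j)) \<and> (j \<notin> I i \<longrightarrow> y j = (\<lambda>k. 0))}"

definition net_map ::
  "(nat \<Rightarrow> nat set) \<Rightarrow> (nat \<Rightarrow> (nat \<Rightarrow> real) \<Rightarrow> (nat \<Rightarrow> nat \<Rightarrow> real) \<Rightarrow> (nat \<Rightarrow> real) \<Rightarrow> (nat \<Rightarrow> real))
   \<Rightarrow> (nat \<Rightarrow> nat \<Rightarrow> real) \<Rightarrow> (nat \<Rightarrow> nat \<Rightarrow> real) \<Rightarrow> (nat \<Rightarrow> nat \<Rightarrow> real)" where
  "net_map I ff x u = (\<lambda>i. ff i (x i) (\<lambda>j. if j \<in> I i then x j else (\<lambda>k. 0)) (u i))"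

text \<open>Standing assumptions on the data of the network.  Continuity of f_i is w.r.t. the
  (product = Euclidean) topology on R^{n_i} x prod_{j in I_i} R^{n_j} x R^{p_i}.\<close>
definition network_setting ::
  "(nat \<Rightarrow> nat) \<Rightarrow> (nat \<Rightarrow> nat) \<Rightarrow> (nat \<Rightarrow> (nat \<Rightarrow> real) \<Rightarrow> real) \<Rightarrow> (nat \<Rightarrow> (nat \<Rightarrow> real) \<Rightarrow> real)
   \<Rightarrow> (nat \<Rightarrow> nat set)
   \<Rightarrow> (nat \<Rightarrow> (nat \<Rightarrow> real) \<Rightarrow> (nat \<Rightarrow> nat \<Rightarrow> real) \<Rightarrow> (nat \<Rightarrow> real) \<Rightarrow> (nat \<Rightarrow> real)) \<Rightarrow> bool" where
  "network_setting n p nx np I ff \<longleftrightarrow>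
     (\<forall>i. 0 < n i \<and> 0 < p i) \<and>
     (\<forall>i. is_norm_on (Vsp (n i)) (nx i) \<and> is_norm_on (Vsp (p i)) (np i)) \<and>
     (\<forall>i. finite (I i) \<and> i \<notin> I i \<and> finite {j. i \<in> I j}) \<and>
     (\<forall>i. continuous_on (Vsp (n i) \<times> nbr_dom I n i \<times> Vsp (p i)) (\<lambda>(a, b, c). ff i a b c)) \<and>
     (\<forall>i. \<forall>a\<in>Vsp (n i). \<forall>b\<in>nbr_dom I n i. \<forall>c\<in>Vsp (p i). ff i a b c \<in> Vsp (n i))"

definition well_posed where
  "well_posed n p nx np I ff \<longleftrightarrow> (\<forall>x\<in>seqsp n nx. \<forall>u\<in>seqsp p np. net_map I ff x u \<in> seqsp n nx)"

definition inp_seqs :: "(nat \<Rightarrow> nat) \<Rightarrow> (nat \<Rightarrow> (nat \<Rightarrow> real) \<Rightarrow> real) \<Rightarrow> (nat \<Rightarrow> nat \<Rightarrow> nat \<Rightarrow> real) set" where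
  "inp_seqs p np = {u. (\<forall>k. u k \<in> seqsp p np) \<and> bdd_above (range (\<lambda>k. supn np (u k)))}"

definition linf :: "(nat \<Rightarrow> (nat \<Rightarrow> real) \<Rightarrow> real) \<Rightarrow> (nat \<Rightarrow> nat \<Rightarrow> nat \<Rightarrow> real) \<Rightarrow> real" where
  "linf np u = (SUP k. supn np (u k))"

primrec traj :: "('x \<Rightarrow> 'u \<Rightarrow> 'x) \<Rightarrow> 'x \<Rightarrow> (nat \<Rightarrow> 'u) \<Rightarrow> nat \<Rightarrow> 'x" where
  "traj F xi u 0 = xi"
| "traj F xi u (Suc k) = F (traj F xi u k) (u k)"

definition setdist :: "(nat \<Rightarrow> (nat \<Rightarrow> real) \<Rightarrow> real) \<Rightarrow> (nat \<Rightarrow> nat \<Rightarrow> real) set \<Rightarrow> (nat \<Rightarrow> nat \<Rightarrow> real) \<Rightarrow> real" where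
  "setdist N A x = (INF y\<in>A. supn N (\<lambda>i k. x i k - y i k))"

text \<open>Closedness of A in the normed space (X, |.|_inf) (sequential closedness; X is a metric space).\<close>
definition closed_in_seqsp where
  "closed_in_seqsp n N A \<longleftrightarrow>
     (\<forall>s x. (\<forall>k. s k \<in> A) \<longrightarrow> x \<in> seqsp n N \<longrightarrow>
        (\<lambda>k. supn N (\<lambda>i j. s k i j - x i j)) \<longlonglongrightarrow> 0 \<longrightarrow> x \<in> A)"

definition classK :: "(real \<Rightarrow> real) \<Rightarrow> bool" where
  "classK g \<longleftrightarrow> g 0 = 0 \<and> continuous_on {0..} g \<and> strict_mono_on {0..} g"

definition classKinf :: "(real \<Rightarrow> real) \<Rightarrow> bool" where
  "classKinf g \<longleftrightarrow> classK g \<and> filterlim g at_top at_top"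

definition classKL :: "(real \<Rightarrow> real \<Rightarrow> real) \<Rightarrow> bool" where
  "classKL b \<longleftrightarrow> continuous_on ({0..} \<times> {0..}) (\<lambda>(r, t). b r t) \<and>
     (\<forall>t\<ge>0. classK (\<lambda>r. b r t)) \<and>
     (\<forall>r\<ge>0. (\<forall>t s. 0 \<le> t \<longrightarrow> t \<le> s \<longrightarrow> b r s \<le> b r t) \<and> ((\<lambda>t. b r t) \<longlongrightarrow> 0) at_top)"

definition is_ISS where
  "is_ISS X Us F dA nu \<longleftrightarrow> (\<exists>\<beta> \<gamma>. classKL \<beta> \<and> classK \<gamma> \<and>
     (\<forall>\<xi>\<in>X. \<forall>u\<in>Us. \<forall>k. dA (traj F \<xi> u k) \<le> max (\<beta> (dA \<xi>) (real k)) (\<gamma> (nu u))))"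

definition is_eISS where
  "is_eISS X Us F dA nu \<longleftrightarrow> (\<exists>C \<rho> \<gamma>. C \<ge> 1 \<and> 0 \<le> \<rho> \<and> \<rho> < 1 \<and> classK \<gamma> \<and>
     (\<forall>\<xi>\<in>X. \<forall>u\<in>Us. \<forall>k. dA (traj F \<xi> u k) \<le> max (C * \<rho> ^ k * dA \<xi>) (\<gamma> (nu u))))"

definition cont_on_seqsp where
  "cont_on_seqsp n N V \<longleftrightarrow> (\<forall>x\<in>seqsp n N. \<forall>e>0. \<exists>d>0. \<forall>y\<in>seqsp n N.
      supn N (\<lambda>i k. y i k - x i k) < d \<longrightarrow> \<bar>V y - V x\<bar> < e)"

definition fs_ISS_Lyap where
  "fs_ISS_Lyap n N Us F dA nu V \<longleftrightarrow> cont_on_seqsp n N V \<and> (\<forall>\<xi>\<in>seqsp n N. 0 \<le> V \<xi>) \<and>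
     (\<exists>M::nat. \<exists>wl wu \<alpha> \<gamma>. M \<ge> 1 \<and> classKinf wl \<and> classKinf wu \<and> classKinf \<alpha> \<and>
        (\<forall>s>0. \<alpha> s < s) \<and> classK \<gamma> \<and>
        (\<forall>\<xi>\<in>seqsp n N. \<forall>u\<in>Us. wl (dA \<xi>) \<le> V \<xi> \<and> V \<xi> \<le> wu (dA \<xi>) \<and>
           V (traj F \<xi> u M) \<le> max (\<alpha> (V \<xi>)) (\<gamma> (nu u))))"

definition fs_eISS_Lyap where
  "fs_eISS_Lyap n N Us F dA nu V \<longleftrightarrow> cont_on_seqsp n N V \<and> (\<forall>\<xi>\<in>seqsp n N. 0 \<le> V \<xi>) \<and>
     (\<exists>M::nat. \<exists>wl wu b \<kappa> \<gamma>. M \<ge> 1 \<and> wl > 0 \<and> wu > 0 \<and> b > 0 \<and> 0 \<le> \<kappa> \<and> \<kappa> < 1 \<and> classK \<gamma> \<and>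
        (\<forall>\<xi>\<in>seqsp n N. \<forall>u\<in>Us. wl * dA \<xi> powr b \<le> V \<xi> \<and> V \<xi> \<le> wu * dA \<xi> powr b \<and>
           V (traj F \<xi> u M) \<le> max (\<kappa> * V \<xi>) (\<gamma> (nu u))))"

end

theory Submission
  imports Defs
begin


lemma classK_less: "classK g \<Longrightarrow> 0 \<le> s \<Longrightarrow> s < t \<Longrightarrow> g s < g t"
  unfolding classK_def strict_mono_on_def by auto

lemma classK_mono: "classK g \<Longrightarrow> 0 \<le> s \<Longrightarrow> s \<le> t \<Longrightarrow> g s \<le> g t"
  using classK_less[of g s t] by (cases "s = t") auto

lemma classK_nonneg: "classK g \<Longrightarrow> 0 \<le> s \<Longrightarrow> 0 \<le> g s"
  using classK_mono[of g 0 s] by (auto simp: classK_def)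

lemma classK_pos: "classK g \<Longrightarrow> 0 < s \<Longrightarrow> 0 < g s"
  using classK_less[of g 0 s] by (auto simp: classK_def)

lemma classK_le_iff: "classK g \<Longrightarrow> 0 \<le> s \<Longrightarrow> 0 \<le> t \<Longrightarrow> g s \<le> g t \<longleftrightarrow> s \<le> t"
  using classK_less[of g t s] classK_mono[of g s t] by (cases "s \<le> t") auto

lemma classK_cont: "classK g \<Longrightarrow> continuous_on {0..} g"
  by (simp add: classK_def)

lemma classK_id: "classK (\<lambda>s. s)"
  by (auto simp: classK_def strict_mono_on_def continuous_on_id)

lemma classK_add: "classK f \<Longrightarrow> classK g \<Longrightarrow> classK (\<lambda>s. f s + g s)"
  unfolding classK_def strict_mono_on_def
  by (auto intro!: continuous_on_add add_strict_mono)

lemma classK_max: "classK f \<Longrightarrow> classK g \<Longrightarrow> classK (\<lambda>s. max (f s) (g s))"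
proof -
  assume f: "classK f" and g: "classK g"
  have "continuous_on {0..} (\<lambda>s. max (f s) (g s))"
    using classK_cont[OF f] classK_cont[OF g] by (rule continuous_on_max)
  moreover have "strict_mono_on {0..} (\<lambda>s. max (f s) (g s))"
    unfolding strict_mono_on_def
  proof (intro allI impI)
    fix r s :: real assume "r \<in> {0..} \<and> s \<in> {0..} \<and> r < s"
    then have "f r < f s" "g r < g s" using classK_less[OF f] classK_less[OF g] by auto
    then show "max (f r) (g r) < max (f s) (g s)" by (auto simp: max_def)
  qed
  ultimately show ?thesis using f g by (simp add: classK_def)
qed

lemma classK_comp: "classK f \<Longrightarrow> classK g \<Longrightarrow> classK (\<lambda>s. f (g s))"
proof -
  assume f: "classK f" and g: "classK g"
  have img: "g ` {0..} \<subseteq> {0..}" using classK_nonneg[OF g] by auto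
  have "continuous_on {0..} (\<lambda>s. f (g s))"
    using continuous_on_compose2[OF classK_cont[OF f] classK_cont[OF g] img] .
  moreover have "f (g 0) = 0" using f g by (simp add: classK_def)
  moreover have "strict_mono_on {0..} (\<lambda>s. f (g s))"
    unfolding strict_mono_on_def
    using classK_less[OF f] classK_less[OF g] classK_nonneg[OF g] by auto
  ultimately show ?thesis by (simp add: classK_def)
qed

lemma classK_cmult: "0 < c \<Longrightarrow> classK (\<lambda>s. c * s)"
  unfolding classK_def strict_mono_on_def by (auto intro!: continuous_intros)

lemma classK_multc: "0 < c \<Longrightarrow> classK f \<Longrightarrow> classK (\<lambda>s. c * f s)"
  using classK_comp[OF classK_cmult[of c], of f] by simp

lemma classK_scale: "0 < c \<Longrightarrow> classK f \<Longrightarrow> classK (\<lambda>s. f (c * s))"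
  using classK_comp[OF _ classK_cmult[of c], of f] by simp

lemma classK_powr: "0 < e \<Longrightarrow> classK (\<lambda>s. s powr e)"
proof -
  assume e: "0 < e"
  have "continuous_on {0..} (\<lambda>s::real. s powr e)"
    by (rule continuous_on_powr') (use e in \<open>auto intro: continuous_intros\<close>)
  moreover have "strict_mono_on {0..} (\<lambda>s::real. s powr e)"
    unfolding strict_mono_on_def using e by (auto intro: powr_less_mono2)
  ultimately show ?thesis by (simp add: classK_def)
qed

lemma classK_sum2: "classK f \<Longrightarrow> 0 \<le> a \<Longrightarrow> 0 \<le> b \<Longrightarrow> f (a + b) \<le> max (f (2*a)) (f (2*b))"
proof (cases "a \<le> b")
  case True
  assume f: "classK f" and a: "0 \<le> a" and b: "0 \<le> b"
  have "f (a + b) \<le> f (2*b)" by (rule classK_mono[OF f]) (use True a in auto)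
  then show ?thesis by simp
next
  case False
  assume f: "classK f" and a: "0 \<le> a" and b: "0 \<le> b"
  have "f (a + b) \<le> f (2*a)" by (rule classK_mono[OF f]) (use False b in auto)
  then show ?thesis by simp
qed

lemma classK_sum2': "classK f \<Longrightarrow> 0 \<le> a \<Longrightarrow> 0 \<le> b \<Longrightarrow> f (a + b) \<le> f (2*a) + f (2*b)"
  using classK_sum2[of f a b] classK_nonneg[of f "2*a"] classK_nonneg[of f "2*b"] by auto

lemma classK_below: "classK \<alpha> \<Longrightarrow> (\<forall>s>0. \<alpha> s < s) \<Longrightarrow> 0 \<le> s \<Longrightarrow> \<alpha> s \<le> s"
  by (cases "s = 0") (auto simp: classK_def less_imp_le)



lemma cont_local:
  fixes f :: "real \<Rightarrow> real"
  assumes "\<And>x. 0 \<le> x \<Longrightarrow> \<exists>T>x. continuous_on {0..T} f"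
  shows "continuous_on {0..} f"
  unfolding continuous_on_eq_continuous_within
proof
  fix x :: real assume "x \<in> {0..}"
  then obtain T where T: "T > x" "continuous_on {0..T} f" using assms by auto
  have "continuous (at x within {0..T}) f"
    using T \<open>x \<in> {0..}\<close> by (simp add: continuous_on_eq_continuous_within)
  moreover have "at x within {0..} = at x within {0..T}"
    by (rule at_within_nhd[of _ "{..<T}"]) (use T in auto)
  ultimately show "continuous (at x within {0..}) f" by simp
qed

lemma classKinf_inverse:
  assumes w: "classKinf w"
  shows "\<exists>h. classK h \<and> (\<forall>s\<ge>0. h (w s) = s) \<and> (\<forall>y\<ge>0. w (h y) = y \<and> h y \<ge> 0)"
proof -
  have K: "classK w" using w by (simp add: classKinf_def)
  have lim: "filterlim w at_top at_top" using w by (simp add: classKinf_def)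
  have big: "\<exists>T\<ge>0. w T > y" for y
  proof -
    have "eventually (\<lambda>x. w x \<ge> y + 1) at_top" using lim by (simp add: filterlim_at_top)
    then obtain N where N: "\<And>x. x \<ge> N \<Longrightarrow> w x \<ge> y + 1" by (auto simp: eventually_at_top_linorder)
    show ?thesis using N[of "max N 0"] by (intro exI[of _ "max N 0"]) auto
  qed
  have surj: "\<exists>s\<ge>0. w s = y" if y0: "y \<ge> 0" for y
  proof -
    obtain T where T: "T \<ge> 0" "w T > y" using big by auto
    have c: "continuous_on {0..T} w" using classK_cont[OF K] by (rule continuous_on_subset) auto
    have "w 0 \<le> y" using K y0 by (simp add: classK_def)
    then obtain s where "0 \<le> s" "s \<le> T" "w s = y"
      using IVT'[of w 0 y T, OF _ _ T(1) c] T(2) by auto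
    then show ?thesis by auto
  qed
  have inj: "inj_on w {0..}"
    using K unfolding classK_def by (auto intro: strict_mono_on_imp_inj_on)
  define h where "h = the_inv_into {0..} w"
  have hw: "h (w s) = s" if "s \<ge> 0" for s
    using the_inv_into_f_f[OF inj] that by (simp add: h_def)
  have wh: "w (h y) = y \<and> h y \<ge> 0" if y0: "y \<ge> 0" for y
  proof -
    obtain s where "s \<ge> 0" "w s = y" using surj[OF y0] by auto
    then show ?thesis using hw by auto
  qed
  have cont: "continuous_on {0..} h"
  proof (rule cont_local)
    fix x :: real assume x: "0 \<le> x"
    obtain T where T: "T \<ge> 0" "w T > x" using big by auto
    have c: "continuous_on {0..T} w" using classK_cont[OF K] by (rule continuous_on_subset) auto
    have img: "w ` {0..T} = {0..w T}"
    proof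
      show "w ` {0..T} \<subseteq> {0..w T}"
      proof
        fix y assume "y \<in> w ` {0..T}"
        then obtain s where s: "s \<in> {0..T}" "y = w s" by blast
        then show "y \<in> {0..w T}" using classK_mono[OF K, of s T] classK_nonneg[OF K, of s] by simp
      qed
      show "{0..w T} \<subseteq> w ` {0..T}"
      proof
        fix y assume y: "y \<in> {0..w T}"
        have "w 0 \<le> y" using K y by (simp add: classK_def)
        then obtain s where "0 \<le> s" "s \<le> T" "w s = y" using IVT'[of w 0 y T, OF _ _ T(1) c] y by auto
        then show "y \<in> w ` {0..T}" by auto
      qed
    qed
    have "continuous_on (w ` {0..T}) h"
      by (rule continuous_on_inv[OF c]) (use hw in auto)
    then show "\<exists>T>x. continuous_on {0..T} h" using T img by auto
  qed
  have "h 0 = 0" using hw[of 0] K by (simp add: classK_def)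
  moreover have "strict_mono_on {0..} h"
    unfolding strict_mono_on_def
  proof (intro allI impI)
    fix r s :: real assume "r \<in> {0..} \<and> s \<in> {0..} \<and> r < s"
    then have rs: "r \<in> {0..}" "s \<in> {0..}" "r < s" by auto
    show "h r < h s"
    proof (rule ccontr)
      assume "\<not> h r < h s"
      then have "h s \<le> h r" by simp
      moreover have "h s \<ge> 0" using wh rs by simp
      ultimately have "w (h s) \<le> w (h r)" using classK_mono[OF K] by blast
      then show False using wh[of s] wh[of r] rs by simp
    qed
  qed
  ultimately have hK: "classK h" using cont by (simp add: classK_def)
  show ?thesis
    apply (rule exI[of _ h])
    using hK hw wh by simp
qed



lemma interp:
  fixes a :: "nat \<Rightarrow> real"
  assumes dec: "\<And>k. a (Suc k) \<le> a k" and pos: "\<And>k. 0 < a k" and lim: "a \<longlonglongrightarrow> 0"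
  shows "\<exists>\<phi>. continuous_on {0..} \<phi> \<and> (\<forall>k. \<phi> (real k) = a k) \<and>
     (\<forall>t s. 0 \<le> t \<longrightarrow> t \<le> s \<longrightarrow> \<phi> s \<le> \<phi> t) \<and> (\<forall>t\<ge>0. 0 < \<phi> t) \<and> (\<phi> \<longlongrightarrow> 0) at_top"
proof -
  define \<phi> where "\<phi> t = (let j = nat \<lfloor>t\<rfloor> in a j + (t - real j) * (a (Suc j) - a j))" for t :: real
  have ds: "decseq a" using dec by (rule decseq_SucI)
  have adec: "i \<le> j \<Longrightarrow> a j \<le> a i" for i j using ds by (simp add: decseq_def)
  have piece: "\<phi> t = a j + (t - real j) * (a (Suc j) - a j)" if "real j \<le> t" "t \<le> real j + 1" for t j
  proof (cases "t = real j + 1")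
    case True
    then have "nat \<lfloor>t\<rfloor> = Suc j" by simp
    then show ?thesis using True by (simp add: \<phi>_def algebra_simps)
  next
    case False
    then have "nat \<lfloor>t\<rfloor> = j" using that by linarith
    then show ?thesis by (simp add: \<phi>_def)
  qed
  have fl: "real (nat \<lfloor>t\<rfloor>) \<le> t \<and> t \<le> real (nat \<lfloor>t\<rfloor>) + 1" if "0 \<le> t" for t :: real
    using that by linarith
  have bounds: "a (Suc j) \<le> \<phi> t \<and> \<phi> t \<le> a j" if "real j \<le> t" "t \<le> real j + 1" for t j
  proof -
    have e: "\<phi> t = a j + (t - real j) * (a (Suc j) - a j)" using piece that .
    have "0 \<le> t - real j" "t - real j \<le> 1" using that by auto
    moreover have "a (Suc j) - a j \<le> 0" using dec[of j] by simp
    ultimately have "(t - real j) * (a (Suc j) - a j) \<le> 0"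
      by (auto intro: mult_nonneg_nonpos)
    have "1 * (a (Suc j) - a j) \<le> (t - real j) * (a (Suc j) - a j)"
      by (rule mult_right_mono_neg) (use that dec[of j] in auto)
    note this \<open>(t - real j) * (a (Suc j) - a j) \<le> 0\<close>
    then show ?thesis using e by simp
  qed
  have val: "\<phi> (real k) = a k" for k using piece[of k "real k"] by simp
  have cont_N: "continuous_on {0..real N} \<phi>" for N
  proof (induction N)
    case 0
    then show ?case by simp
  next
    case (Suc N)
    have "continuous_on {real N..real N + 1} (\<lambda>t. a N + (t - real N) * (a (Suc N) - a N))"
      by (intro continuous_intros)
    then have "continuous_on {real N..real N + 1} \<phi>"
      by (rule continuous_on_cong[THEN iffD1, rotated -1]) (auto simp: piece)
    then have "continuous_on ({0..real N} \<union> {real N..real N + 1}) \<phi>"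
      using Suc by (intro continuous_on_closed_Un) auto
    moreover have "{0..real N} \<union> {real N..real N + 1} = {0..real (Suc N)}" by auto
    ultimately show ?case by simp
  qed
  have cont: "continuous_on {0..} \<phi>"
  proof (rule cont_local)
    fix x :: real assume "0 \<le> x"
    obtain N :: nat where "x < real N" using reals_Archimedean2 by blast
    then show "\<exists>T>x. continuous_on {0..T} \<phi>" using cont_N by blast
  qed
  have mono: "\<phi> s \<le> \<phi> t" if "0 \<le> t" "t \<le> s" for t s
  proof -
    define j where "j = nat \<lfloor>t\<rfloor>"
    define i where "i = nat \<lfloor>s\<rfloor>"
    have tj: "real j \<le> t" "t \<le> real j + 1" using fl[OF that(1)] by (auto simp: j_def)
    have si: "real i \<le> s" "s \<le> real i + 1" using fl[of s] that by (auto simp: i_def)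
    have ji: "j \<le> i" unfolding i_def j_def using that by (simp add: floor_mono nat_mono)
    show ?thesis
    proof (cases "j = i")
      case True
      have "(s - real j) * (a (Suc j) - a j) \<le> (t - real j) * (a (Suc j) - a j)"
        using dec[of j] that by (intro mult_right_mono_neg) auto
      then show ?thesis using piece[OF tj] piece[of j s] si True by simp
    next
      case False
      then have "Suc j \<le> i" using ji by simp
      then have "a i \<le> a (Suc j)" by (rule adec)
      then show ?thesis using bounds[OF tj] bounds[OF si] by linarith
    qed
  qed
  have posi: "0 < \<phi> t" if "0 \<le> t" for t
    using bounds[of "nat \<lfloor>t\<rfloor>" t] fl[OF that] pos[of "Suc (nat \<lfloor>t\<rfloor>)"] by linarith
  have fnat: "filterlim (\<lambda>t::real. nat \<lfloor>t\<rfloor>) sequentially at_top"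
    by (rule filterlim_compose[OF filterlim_nat_sequentially filterlim_floor_sequentially])
  have l2: "((\<lambda>t::real. a (nat \<lfloor>t\<rfloor>)) \<longlongrightarrow> 0) at_top"
    by (rule filterlim_compose[OF lim fnat])
  have "(\<phi> \<longlongrightarrow> 0) at_top"
  proof (rule tendsto_sandwich[OF _ _ tendsto_const l2])
    show "\<forall>\<^sub>F t in at_top. 0 \<le> \<phi> t"
      using eventually_ge_at_top[of "0::real"] by eventually_elim (use posi in \<open>auto intro: less_imp_le\<close>)
    show "\<forall>\<^sub>F t in at_top. \<phi> t \<le> a (nat \<lfloor>t\<rfloor>)"
      using eventually_ge_at_top[of "0::real"] by eventually_elim (use bounds fl in blast)
  qed
  then show ?thesis using cont val mono posi by blast
qed



lemma exp_ge_pow2: "(2::real) ^ n \<le> exp (real n)"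
proof -
  have "(2::real) \<le> exp 1" using exp_ge_add_one_self[of 1] by simp
  then have "(2::real) ^ n \<le> exp 1 ^ n" by (rule power_mono) simp
  also have "\<dots> = exp (real n)" by (simp add: exp_of_nat_mult[symmetric])
  finally show ?thesis .
qed

lemma KL_bound:
  fixes B :: "real \<Rightarrow> nat \<Rightarrow> real" and c :: "real \<Rightarrow> real"
  assumes nonneg: "\<And>r k. 0 \<le> r \<Longrightarrow> 0 \<le> B r k"
    and monoB: "\<And>r r' k. 0 \<le> r \<Longrightarrow> r \<le> r' \<Longrightarrow> B r k \<le> B r' k"
    and decB: "\<And>r k. 0 \<le> r \<Longrightarrow> B r (Suc k) \<le> B r k"
    and limB: "\<And>r. 0 \<le> r \<Longrightarrow> B r \<longlonglongrightarrow> 0"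
    and bnd: "\<And>r k. 0 \<le> r \<Longrightarrow> B r k \<le> c r"
    and cK: "classK c"
  shows "\<exists>\<beta>. classKL \<beta> \<and> (\<forall>r\<ge>0. \<forall>k. B r k \<le> \<beta> r (real k))"
proof -
  define tm where "tm k m = min 1 (B (real m) k) / 2 ^ m" for k m :: nat
  define \<psi> where "\<psi> k = (SUP m. tm k m)" for k
  have term_nn: "0 \<le> tm k m" for k m using nonneg[of "real m" k] by (simp add: tm_def)
  have term_le1: "tm k m \<le> 1" for k m
  proof -
    have "min 1 (B (real m) k) \<le> 1" by simp
    also have "1 \<le> (2::real) ^ m" by simp
    finally show ?thesis using term_nn[of k m] by (simp add: tm_def divide_le_eq)
  qed
  have bdd: "bdd_above (range (tm k))" for k by (rule bdd_aboveI2[of _ _ 1]) (rule term_le1)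
  have psi_ge: "tm k m \<le> \<psi> k" for k m unfolding \<psi>_def by (rule cSUP_upper[OF _ bdd]) simp
  have psi_nn: "0 \<le> \<psi> k" for k using psi_ge[of k 0] term_nn[of k 0] by simp
  have psi_dec: "\<psi> (Suc k) \<le> \<psi> k" for k
    unfolding \<psi>_def
  proof (rule cSUP_least)
    fix m
    have "tm (Suc k) m \<le> tm k m"
      unfolding tm_def by (intro divide_right_mono min.mono decB) auto
    also have "\<dots> \<le> (SUP m. tm k m)" by (rule cSUP_upper[OF _ bdd]) simp
    finally show "tm (Suc k) m \<le> (SUP m. tm k m)" .
  qed simp
  have psi_up: "\<psi> k \<le> max (1 / 2 ^ m0) (B (real m0) k)" for k m0
    unfolding \<psi>_def
  proof (rule cSUP_least)
    fix m
    show "tm k m \<le> max (1 / 2 ^ m0) (B (real m0) k)"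
    proof (cases "m \<le> m0")
      case True
      have h0: "0 \<le> min 1 (B (real m) k)" using nonneg[of "real m" k] by simp
      have "min 1 (B (real m) k) / 2^m \<le> min 1 (B (real m) k) / 1"
        by (rule divide_left_mono) (use h0 in auto)
      then have "tm k m \<le> min 1 (B (real m) k)" by (simp add: tm_def)
      also have "\<dots> \<le> B (real m0) k" using monoB[of "real m" "real m0" k] True by simp
      finally show ?thesis by simp
    next
      case False
      have "tm k m \<le> 1 / 2 ^ m" unfolding tm_def by (intro divide_right_mono) auto
      also have "\<dots> \<le> 1 / 2 ^ m0" using False by (intro divide_left_mono power_increasing) auto
      finally show ?thesis by simp
    qed
  qed simp
  have psi_lim: "\<psi> \<longlonglongrightarrow> 0"
  proof (rule order_tendstoI)
    fix e :: real assume "0 > e"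
    then show "\<forall>\<^sub>F k in sequentially. e < \<psi> k"
      by (intro always_eventually allI) (use psi_nn in \<open>auto intro: order.strict_trans2\<close>)
  next
    fix e :: real assume e: "0 < e"
    obtain m0 :: nat where m0: "1 / 2 ^ m0 < e"
    proof -
      obtain n :: nat where "(1/2::real) ^ n < e" using real_arch_pow_inv[OF e, of "1/2"] by auto
      then show ?thesis using that[of n] by (simp add: power_one_over)
    qed
    have "\<forall>\<^sub>F k in sequentially. B (real m0) k < e"
      using order_tendstoD(2)[OF limB e] by simp
    then show "\<forall>\<^sub>F k in sequentially. \<psi> k < e"
    proof eventually_elim
      case (elim k)
      show ?case using psi_up[of k m0] elim m0 by linarith
    qed
  qed
  define \<sigma> where "\<sigma> r = sqrt (c r * (1 + c r) * exp (r + 1))" for r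
  have key: "B r k \<le> \<sigma> r * sqrt (\<psi> k)" if r: "0 \<le> r" for r k
  proof -
    define R where "R = nat \<lceil>r\<rceil>"
    have R1: "r \<le> real R" "real R \<le> r + 1" unfolding R_def using r by linarith+
    have BR: "B r k \<le> B (real R) k" using monoB R1 r by blast
    have c0: "0 \<le> c r" using classK_nonneg[OF cK r] .
    have B0: "0 \<le> B r k" using nonneg[OF r] .
    have p2: "(0::real) < 2 ^ R" by simp
    have claim: "B r k \<le> (1 + c r) * 2 ^ R * \<psi> k"
    proof (cases "B (real R) k \<le> 1")
      case True
      then have "B (real R) k / 2 ^ R \<le> \<psi> k" using psi_ge[of k R] by (simp add: tm_def)
      then have "B (real R) k \<le> 2 ^ R * \<psi> k" using p2 by (simp add: divide_le_eq mult.commute)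
      moreover have "2 ^ R * \<psi> k \<le> (1 + c r) * 2 ^ R * \<psi> k"
      proof -
        have "0 \<le> 2 ^ R * \<psi> k" using psi_nn[of k] p2 by simp
        then have "1 * (2 ^ R * \<psi> k) \<le> (1 + c r) * (2 ^ R * \<psi> k)"
          using c0 by (intro mult_right_mono) auto
        then show ?thesis by (simp add: mult.assoc)
      qed
      ultimately show ?thesis using BR by linarith
    next
      case False
      then have "1 / 2 ^ R \<le> \<psi> k" using psi_ge[of k R] by (simp add: tm_def)
      then have "1 \<le> 2 ^ R * \<psi> k" using p2 by (simp add: divide_le_eq mult.commute)
      then have "c r \<le> c r * (2 ^ R * \<psi> k)" using c0 by (simp add: mult_le_cancel_left1)
      moreover have "c r * (2 ^ R * \<psi> k) \<le> (1 + c r) * 2 ^ R * \<psi> k"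
        using psi_nn[of k] p2 by (simp add: algebra_simps)
      ultimately show ?thesis using bnd[OF r, of k] by linarith
    qed
    have "B r k * B r k \<le> c r * ((1 + c r) * 2 ^ R * \<psi> k)"
      by (rule mult_mono) (use bnd[OF r, of k] claim c0 B0 in auto)
    also have "\<dots> \<le> c r * ((1 + c r) * exp (r + 1) * \<psi> k)"
    proof -
      have "(2::real) ^ R \<le> exp (r + 1)"
        using exp_ge_pow2[of R] R1 by (meson exp_le_cancel_iff order_trans)
      then show ?thesis using c0 psi_nn[of k]
        by (intro mult_left_mono mult_right_mono) auto
    qed
    also have "\<dots> = \<sigma> r ^ 2 * \<psi> k"
      using c0 by (simp add: \<sigma>_def)
    finally have X: "B r k * B r k \<le> \<sigma> r ^ 2 * \<psi> k" .
    have e: "(\<sigma> r * sqrt (\<psi> k))\<^sup>2 = \<sigma> r ^ 2 * \<psi> k"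
      using psi_nn[of k] by (simp add: power_mult_distrib)
    have "(B r k)\<^sup>2 \<le> (\<sigma> r * sqrt (\<psi> k))\<^sup>2" unfolding e using X by (simp add: power2_eq_square)
    moreover have "0 \<le> \<sigma> r * sqrt (\<psi> k)" using c0 psi_nn[of k] by (simp add: \<sigma>_def)
    ultimately show ?thesis using power2_le_imp_le by blast
  qed
  define a where "a k = sqrt (\<psi> k) + 1 / (real k + 1)" for k
  have a_dec: "a (Suc k) \<le> a k" for k
  proof -
    have "sqrt (\<psi> (Suc k)) \<le> sqrt (\<psi> k)" using psi_dec[of k] by simp
    moreover have "1 / (real (Suc k) + 1) \<le> 1 / (real k + 1)" by (rule divide_left_mono) auto
    ultimately show ?thesis unfolding a_def by (intro add_mono) auto
  qed
  have a_pos: "0 < a k" for k using psi_nn[of k] by (simp add: a_def add_nonneg_pos)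
  have a_lim: "a \<longlonglongrightarrow> 0"
  proof -
    have "(\<lambda>k. sqrt (\<psi> k)) \<longlonglongrightarrow> sqrt 0" by (intro tendsto_intros psi_lim)
    moreover have "(\<lambda>k. 1 / (real k + 1)) \<longlonglongrightarrow> 0"
      using LIMSEQ_inverse_real_of_nat by (simp add: inverse_eq_divide add.commute)
    ultimately show ?thesis unfolding a_def using tendsto_add by fastforce
  qed
  obtain \<phi> where phi: "continuous_on {0..} \<phi>" "\<And>k. \<phi> (real k) = a k"
    "\<And>t s. 0 \<le> t \<Longrightarrow> t \<le> s \<Longrightarrow> \<phi> s \<le> \<phi> t" "\<And>t. 0 \<le> t \<Longrightarrow> 0 < \<phi> t" "(\<phi> \<longlongrightarrow> 0) at_top"
    using interp[OF a_dec a_pos a_lim] by blast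
  have \<sigma>K: "classK \<sigma>"
  proof -
    have "continuous_on {0..} \<sigma>" unfolding \<sigma>_def
      using classK_cont[OF cK] by (intro continuous_intros) auto
    moreover have "\<sigma> 0 = 0" using cK by (simp add: \<sigma>_def classK_def)
    moreover have "strict_mono_on {0..} \<sigma>"
      unfolding strict_mono_on_def
    proof (intro allI impI)
      fix r s :: real assume "r \<in> {0..} \<and> s \<in> {0..} \<and> r < s"
      then have rs: "0 \<le> r" "r < s" by auto
      have c1: "c r < c s" using classK_less[OF cK rs] .
      have c0: "0 \<le> c r" using classK_nonneg[OF cK rs(1)] .
      have "c r * (1 + c r) < c s * (1 + c s)" using c1 c0 by (intro mult_strict_mono) auto
      moreover have "exp (r + 1) < exp (s + 1)" using rs by simp
      moreover have "0 < c s * (1 + c s)" using c0 c1 by (intro mult_pos_pos) auto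
      ultimately have "c r * (1 + c r) * exp (r + 1) < c s * (1 + c s) * exp (s + 1)"
        by (rule mult_strict_mono) auto
      then show "\<sigma> r < \<sigma> s" by (simp add: \<sigma>_def)
    qed
    ultimately show ?thesis by (simp add: classK_def)
  qed
  define \<beta> where "\<beta> r t = \<sigma> r * \<phi> t" for r t
  have "classKL \<beta>"
    unfolding classKL_def
  proof (intro conjI allI impI)
    have c1: "continuous_on ({0..} \<times> {0..}) (\<lambda>x. \<sigma> (fst x))"
      by (rule continuous_on_compose2[OF classK_cont[OF \<sigma>K] continuous_on_fst]) auto
    have c2: "continuous_on ({0..} \<times> {0..}) (\<lambda>x. \<phi> (snd x))"
      by (rule continuous_on_compose2[OF phi(1) continuous_on_snd]) auto
    show "continuous_on ({0..} \<times> {0..}) (\<lambda>(r, t). \<beta> r t)"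
      using continuous_on_mult[OF c1 c2] by (simp add: \<beta>_def case_prod_beta)
  next
    fix t :: real assume t: "0 \<le> t"
    show "classK (\<lambda>r. \<beta> r t)"
      unfolding \<beta>_def using classK_multc[OF phi(4)[OF t] \<sigma>K] by (simp add: mult.commute)
  next
    fix r t s :: real assume "0 \<le> r" "0 \<le> t" "t \<le> s"
    then show "\<beta> r s \<le> \<beta> r t"
      unfolding \<beta>_def using phi(3) classK_nonneg[OF \<sigma>K] by (simp add: mult_left_mono)
  next
    fix r :: real assume "0 \<le> r"
    show "((\<lambda>t. \<beta> r t) \<longlongrightarrow> 0) at_top"
      unfolding \<beta>_def using tendsto_mult_right_zero[OF phi(5)] by simp
  qed
  moreover have "B r k \<le> \<beta> r (real k)" if "0 \<le> r" for r k
  proof -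
    have "B r k \<le> \<sigma> r * sqrt (\<psi> k)" using key[OF that] .
    also have "\<dots> \<le> \<sigma> r * a k"
      using classK_nonneg[OF \<sigma>K that] by (intro mult_left_mono) (auto simp: a_def)
    finally show ?thesis by (simp add: \<beta>_def phi(2))
  qed
  ultimately show ?thesis by blast
qed



lemma norm_diff_le:
  assumes N: "is_norm_on (Vsp d) N" and v: "v \<in> Vsp d" and w: "w \<in> Vsp d"
  shows "N (\<lambda>k. v k - w k) \<le> N v + N w" and "0 \<le> N v"
proof -
  have mw: "(\<lambda>k. -1 * w k) \<in> Vsp d" using w by (simp add: Vsp_def)
  have "N (\<lambda>k. -1 * w k) = \<bar>-1\<bar> * N w" using N w unfolding is_norm_on_def by blast
  then have "N (\<lambda>k. -1 * w k) = N w" by simp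
  moreover have tri: "\<forall>v\<in>Vsp d. \<forall>w\<in>Vsp d. N (\<lambda>k. v k + w k) \<le> N v + N w"
    using N unfolding is_norm_on_def by blast
  have "N (\<lambda>k. v k + -1 * w k) \<le> N v + N (\<lambda>k. -1 * w k)"
    using tri[rule_format, OF v mw] by simp
  ultimately show "N (\<lambda>k. v k - w k) \<le> N v + N w" by simp
  show "0 \<le> N v" using N v unfolding is_norm_on_def by blast
qed

lemma supn_nonneg:
  assumes N: "\<And>i. is_norm_on (Vsp (d i)) (N i)" and x: "x \<in> seqsp d N"
  shows "0 \<le> supn N x"
proof -
  have "0 \<le> N 0 (x 0)" using norm_diff_le(2)[OF N] x by (auto simp: seqsp_def)
  also have "\<dots> \<le> supn N x" unfolding supn_def by (rule cSUP_upper) (use x in \<open>auto simp: seqsp_def\<close>)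
  finally show ?thesis .
qed

lemma supn_upper:
  assumes x: "x \<in> seqsp d N"
  shows "N i (x i) \<le> supn N x"
  unfolding supn_def by (rule cSUP_upper) (use x in \<open>auto simp: seqsp_def\<close>)

lemma diff_in_seqsp:
  assumes N: "\<And>i. is_norm_on (Vsp (d i)) (N i)" and x: "x \<in> seqsp d N" and y: "y \<in> seqsp d N"
  shows "(\<lambda>i k. x i k - y i k) \<in> seqsp d N"
proof -
  have "N i (\<lambda>k. x i k - y i k) \<le> supn N x + supn N y" for i
  proof -
    have "N i (\<lambda>k. x i k - y i k) \<le> N i (x i) + N i (y i)"
      using norm_diff_le(1)[OF N] x y by (auto simp: seqsp_def)
    also have "\<dots> \<le> supn N x + supn N y" using supn_upper[OF x] supn_upper[OF y] by (rule add_mono)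
    finally show ?thesis .
  qed
  then have "bdd_above (range (\<lambda>i. N i (\<lambda>k. x i k - y i k)))" by (rule bdd_aboveI2)
  moreover have "(\<lambda>k. x i k - y i k) \<in> Vsp (d i)" for i using x y by (auto simp: seqsp_def Vsp_def)
  ultimately show ?thesis by (simp add: seqsp_def)
qed

lemma setdist_nonneg:
  assumes N: "\<And>i. is_norm_on (Vsp (d i)) (N i)" and A: "A \<subseteq> seqsp d N" "A \<noteq> {}" and x: "x \<in> seqsp d N"
  shows "0 \<le> setdist N A x"
  unfolding setdist_def
  by (rule cINF_greatest[OF A(2)]) (use supn_nonneg[OF N diff_in_seqsp[OF N x]] A(1) in auto)

lemma traj_add: "traj F xi u (a + b) = traj F (traj F xi u b) (\<lambda>i. u (i + b)) a"
  by (induction a) auto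

definition shift :: "(nat \<Rightarrow> 'a) \<Rightarrow> nat \<Rightarrow> nat \<Rightarrow> 'a" where
  "shift u m = (\<lambda>i. u (i + m))"

lemma inp_facts:
  assumes N: "\<And>i. is_norm_on (Vsp (p i)) (np i)" and u: "u \<in> inp_seqs p np"
  shows "u k \<in> seqsp p np" "0 \<le> supn np (u k)" "supn np (u k) \<le> linf np u" "0 \<le> linf np u"
    "shift u m \<in> inp_seqs p np" "linf np (shift u m) \<le> linf np u"
proof -
  show uk: "u k \<in> seqsp p np" using u by (simp add: inp_seqs_def)
  show s0: "0 \<le> supn np (u k)" by (rule supn_nonneg[OF N uk])
  have bdd: "bdd_above (range (\<lambda>k. supn np (u k)))" using u by (simp add: inp_seqs_def)
  show sl: "supn np (u k) \<le> linf np u" unfolding linf_def by (rule cSUP_upper[OF _ bdd]) simp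
  show "0 \<le> linf np u" using s0 sl by linarith
  have bdd2: "bdd_above (range (\<lambda>k. supn np (shift u m k)))"
    using bdd unfolding shift_def by (auto simp: bdd_above_def)
  show "shift u m \<in> inp_seqs p np" using u bdd2 by (auto simp: inp_seqs_def shift_def)
  show "linf np (shift u m) \<le> linf np u"
    unfolding linf_def
  proof (rule cSUP_least)
    fix k show "supn np (shift u m k) \<le> (SUP k. supn np (u k))"
      unfolding shift_def by (rule cSUP_upper[OF _ bdd]) simp
  qed simp
qed

lemma traj_in:
  assumes wp: "well_posed n p nx np I ff" and xi: "xi \<in> seqsp n nx" and u: "u \<in> inp_seqs p np"
  shows "traj (net_map I ff) xi u k \<in> seqsp n nx"
proof (induction k)
  case 0 then show ?case using xi by simp
next
  case (Suc k)
  have "u k \<in> seqsp p np" using u by (simp add: inp_seqs_def)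
  then show ?case using Suc wp by (simp add: well_posed_def)
qed

fun Pf :: "(real \<Rightarrow> real) \<Rightarrow> nat \<Rightarrow> real \<Rightarrow> real" where
  "Pf k1 0 = (\<lambda>s. s)"
| "Pf k1 (Suc i) = (\<lambda>s. Pf k1 i s + k1 (2 * Pf k1 i s))"

fun Qf :: "(real \<Rightarrow> real) \<Rightarrow> (real \<Rightarrow> real) \<Rightarrow> nat \<Rightarrow> real \<Rightarrow> real" where
  "Qf k1 k2 0 = k2"
| "Qf k1 k2 (Suc i) = (\<lambda>s. Qf k1 k2 i s + k1 (2 * Qf k1 k2 i s) + k2 s)"

lemma Pf_K: "classK k1 \<Longrightarrow> classK (Pf k1 i)"
proof (induction i)
  case 0 then show ?case by (simp add: classK_id)
next
  case (Suc i)
  have "classK (\<lambda>s. Pf k1 i s + k1 (2 * Pf k1 i s))"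
    by (intro classK_add classK_comp[of k1 "\<lambda>s. 2 * Pf k1 i s"] classK_multc) (use Suc in auto)
  then show ?case by simp
qed

lemma Qf_K: "classK k1 \<Longrightarrow> classK k2 \<Longrightarrow> classK (Qf k1 k2 i)"
proof (induction i)
  case 0 then show ?case by simp
next
  case (Suc i)
  have "classK (\<lambda>s. Qf k1 k2 i s + k1 (2 * Qf k1 k2 i s))"
    by (intro classK_add classK_comp[of k1 "\<lambda>s. 2 * Qf k1 k2 i s"] classK_multc) (use Suc in auto)
  then show ?case using Suc by (auto intro: classK_add)
qed

lemma Pf_mono: assumes "classK k1" "0 \<le> s" "i \<le> j" shows "Pf k1 i s \<le> Pf k1 j s"
  using assms(3)
proof (induction j)
  case 0 then show ?case by simp
next
  case (Suc j)
  show ?case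
  proof (cases "i = Suc j")
    case False
    then have "Pf k1 i s \<le> Pf k1 j s" using Suc by simp
    moreover have "0 \<le> k1 (2 * Pf k1 j s)"
      using classK_nonneg[OF assms(1)] classK_nonneg[OF Pf_K[OF assms(1)] assms(2), of j] by simp
    ultimately show ?thesis by simp
  qed simp
qed

lemma Qf_mono: assumes "classK k1" "classK k2" "0 \<le> s" "i \<le> j" shows "Qf k1 k2 i s \<le> Qf k1 k2 j s"
  using assms(4)
proof (induction j)
  case 0 then show ?case by simp
next
  case (Suc j)
  show ?case
  proof (cases "i = Suc j")
    case False
    then have "Qf k1 k2 i s \<le> Qf k1 k2 j s" using Suc by simp
    moreover have "0 \<le> k1 (2 * Qf k1 k2 j s)"
      using classK_nonneg[OF assms(1)] classK_nonneg[OF Qf_K[OF assms(1,2)] assms(3), of j] by simp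
    moreover have "0 \<le> k2 s" using classK_nonneg[OF assms(2,3)] .
    ultimately show ?thesis by simp
  qed simp
qed

lemma Pf_lin: assumes "\<forall>s\<ge>0. k1 s = c * s" "0 \<le> s" "classK k1" shows "Pf k1 i s = (1 + 2 * c) ^ i * s"
proof (induction i)
  case 0 then show ?case by simp
next
  case (Suc i)
  have "0 \<le> Pf k1 i s" using classK_nonneg[OF Pf_K[OF assms(3)] assms(2)] .
  then show ?case using Suc assms(1) by (simp add: algebra_simps)
qed



lemma fp_nn: fixes \<alpha> :: "real \<Rightarrow> real" shows "(\<And>s. 0 \<le> s \<Longrightarrow> 0 \<le> \<alpha> s) \<Longrightarrow> 0 \<le> s \<Longrightarrow> 0 \<le> (\<alpha> ^^ j) s"
  by (induction j) auto

lemma fp_mono: fixes \<alpha> :: "real \<Rightarrow> real" assumes "\<And>s. 0 \<le> s \<Longrightarrow> 0 \<le> \<alpha> s" "\<And>s t. 0 \<le> s \<Longrightarrow> s \<le> t \<Longrightarrow> \<alpha> s \<le> \<alpha> t"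
  shows "0 \<le> s \<Longrightarrow> s \<le> t \<Longrightarrow> (\<alpha> ^^ j) s \<le> (\<alpha> ^^ j) t"
proof (induction j)
  case 0 then show ?case by simp
next
  case (Suc j)
  then show ?case using assms(2)[OF fp_nn[OF assms(1)]] by simp
qed

lemma fp_dec: fixes \<alpha> :: "real \<Rightarrow> real" assumes "\<And>s. 0 \<le> s \<Longrightarrow> 0 \<le> \<alpha> s" "\<And>s. 0 \<le> s \<Longrightarrow> \<alpha> s \<le> s"
  shows "0 \<le> s \<Longrightarrow> (\<alpha> ^^ Suc j) s \<le> (\<alpha> ^^ j) s"
  using assms(2)[OF fp_nn[OF assms(1)]] by simp

lemma fp_le: fixes \<alpha> :: "real \<Rightarrow> real" assumes "\<And>s. 0 \<le> s \<Longrightarrow> 0 \<le> \<alpha> s" "\<And>s. 0 \<le> s \<Longrightarrow> \<alpha> s \<le> s"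
  shows "0 \<le> s \<Longrightarrow> (\<alpha> ^^ j) s \<le> s"
proof (induction j)
  case 0 then show ?case by simp
next
  case (Suc j)
  then show ?case using fp_dec[OF assms, of s j] by simp
qed

lemma fp_decseq: fixes \<alpha> :: "real \<Rightarrow> real" assumes "\<And>s. 0 \<le> s \<Longrightarrow> 0 \<le> \<alpha> s" "\<And>s. 0 \<le> s \<Longrightarrow> \<alpha> s \<le> s"
  shows "0 \<le> s \<Longrightarrow> i \<le> j \<Longrightarrow> (\<alpha> ^^ j) s \<le> (\<alpha> ^^ i) s"
  using decseq_SucI[of "\<lambda>j. (\<alpha> ^^ j) s"] fp_dec[OF assms] by (simp add: decseq_def)

lemma fp_lim:
  fixes \<alpha> :: "real \<Rightarrow> real"
  assumes K: "classK \<alpha>" and lt: "\<forall>s>0. \<alpha> s < s" and s: "0 \<le> s"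
  shows "(\<lambda>j. (\<alpha> ^^ j) s) \<longlonglongrightarrow> 0"
proof -
  have nn: "\<And>s. 0 \<le> s \<Longrightarrow> 0 \<le> \<alpha> s" using classK_nonneg[OF K] .
  have le: "\<And>s. 0 \<le> s \<Longrightarrow> \<alpha> s \<le> s" using classK_below[OF K lt] .
  define a where "a j = (\<alpha> ^^ j) s" for j
  have "decseq a" unfolding a_def by (rule decseq_SucI) (rule fp_dec[OF nn le s])
  moreover have "\<forall>i. 0 \<le> a i" unfolding a_def using fp_nn[OF nn s] by simp
  ultimately obtain L where L: "a \<longlonglongrightarrow> L" "\<forall>i. L \<le> a i" by (rule decseq_convergent)
  have L0: "0 \<le> L"
    using L(1) \<open>\<forall>i. 0 \<le> a i\<close> by (intro LIMSEQ_le_const) auto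
  have "(\<lambda>j. \<alpha> (a j)) \<longlonglongrightarrow> \<alpha> L"
    by (rule continuous_on_tendsto_compose[OF classK_cont[OF K] L(1)]) (use L0 \<open>\<forall>i. 0 \<le> a i\<close> in auto)
  moreover have "(\<lambda>j. \<alpha> (a j)) = (\<lambda>j. a (Suc j))" by (simp add: a_def)
  ultimately have "(\<lambda>j. a (Suc j)) \<longlonglongrightarrow> \<alpha> L" by simp
  moreover have "(\<lambda>j. a (Suc j)) \<longlonglongrightarrow> L" using L(1) by (rule LIMSEQ_Suc)
  ultimately have "\<alpha> L = L" using LIMSEQ_unique by blast
  then have "L = 0" using lt L0 by (metis less_eq_real_def less_irrefl)
  moreover have "a = (\<lambda>j. (\<alpha> ^^ j) s)" by (simp add: a_def fun_eq_iff)
  ultimately show ?thesis using L(1) by simp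
qed




lemma powr_inv_b: "0 \<le> x \<Longrightarrow> 0 < b \<Longrightarrow> (x powr b) powr (1 / b) = (x::real)"
  by (simp add: powr_powr powr_one)

lemma powr_base_lt1_anti: "0 < x \<Longrightarrow> x < 1 \<Longrightarrow> a \<le> b \<Longrightarrow> (x::real) powr b \<le> x powr a"
proof -
  assume x: "0 < x" "x < 1" and ab: "a \<le> b"
  have "ln x < 0" using x by simp
  then have "b * ln x \<le> a * ln x" using ab by (intro mult_right_mono_neg) auto
  then show ?thesis using x by (simp add: powr_def)
qed

lemma funpow_lin: "((\<lambda>s::real. k * s) ^^ j) s = k ^ j * s"
  by (induction j) auto

context
  fixes n p :: "nat \<Rightarrow> nat"
    and nx np :: "nat \<Rightarrow> (nat \<Rightarrow> real) \<Rightarrow> real"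
    and I :: "nat \<Rightarrow> nat set"
    and ff :: "nat \<Rightarrow> (nat \<Rightarrow> real) \<Rightarrow> (nat \<Rightarrow> nat \<Rightarrow> real) \<Rightarrow> (nat \<Rightarrow> real) \<Rightarrow> (nat \<Rightarrow> real)"
    and A :: "(nat \<Rightarrow> nat \<Rightarrow> real) set"
    and \<kappa>1 \<kappa>2 :: "real \<Rightarrow> real"
  assumes setting: "network_setting n p nx np I ff"
    and wp: "well_posed n p nx np I ff"
    and A_sub: "A \<subseteq> seqsp n nx" and A_ne: "A \<noteq> {}"
    and K1: "classK \<kappa>1" and K2: "classK \<kappa>2"
    and Kbdd: "\<forall>\<xi>\<in>seqsp n nx. \<forall>\<mu>\<in>seqsp p np.
                 setdist nx A (net_map I ff \<xi> \<mu>) \<le> \<kappa>1 (setdist nx A \<xi>) + \<kappa>2 (supn np \<mu>)"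
begin

lemma nxN: "is_norm_on (Vsp (n i)) (nx i)" using setting by (simp add: network_setting_def)
lemma npN: "is_norm_on (Vsp (p i)) (np i)" using setting by (simp add: network_setting_def)

lemma dA_nn: "\<xi> \<in> seqsp n nx \<Longrightarrow> 0 \<le> setdist nx A \<xi>"
  by (rule setdist_nonneg[OF nxN A_sub A_ne])

lemma dA_traj:
  assumes xi: "\<xi> \<in> seqsp n nx" and u: "u \<in> inp_seqs p np"
  shows "setdist nx A (traj (net_map I ff) \<xi> u i)
           \<le> Pf \<kappa>1 i (setdist nx A \<xi>) + Qf \<kappa>1 \<kappa>2 i (linf np u)"
proof (induction i)
  case 0
  show ?case using classK_nonneg[OF K2 inp_facts(4)[OF npN u]] by simp
next
  case (Suc i)
  define r where "r = setdist nx A \<xi>"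
  define w where "w = linf np u"
  define x where "x = traj (net_map I ff) \<xi> u i"
  have x: "x \<in> seqsp n nx" unfolding x_def by (rule traj_in[OF wp xi u])
  have r0: "0 \<le> r" unfolding r_def by (rule dA_nn[OF xi])
  have w0: "0 \<le> w" unfolding w_def by (rule inp_facts(4)[OF npN u])
  have P0: "0 \<le> Pf \<kappa>1 i r" using classK_nonneg[OF Pf_K[OF K1] r0] .
  have Q0: "0 \<le> Qf \<kappa>1 \<kappa>2 i w" using classK_nonneg[OF Qf_K[OF K1 K2] w0] .
  have "setdist nx A (traj (net_map I ff) \<xi> u (Suc i)) = setdist nx A (net_map I ff x (u i))"
    by (simp add: x_def)
  also have "\<dots> \<le> \<kappa>1 (setdist nx A x) + \<kappa>2 (supn np (u i))"
    using Kbdd x inp_facts(1)[OF npN u] by blast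
  also have "\<kappa>1 (setdist nx A x) \<le> \<kappa>1 (Pf \<kappa>1 i r + Qf \<kappa>1 \<kappa>2 i w)"
    by (rule classK_mono[OF K1 dA_nn[OF x]]) (use Suc in \<open>simp add: x_def r_def w_def\<close>)
  also have "\<dots> \<le> \<kappa>1 (2 * Pf \<kappa>1 i r) + \<kappa>1 (2 * Qf \<kappa>1 \<kappa>2 i w)"
    by (rule classK_sum2'[OF K1 P0 Q0])
  also have "\<kappa>2 (supn np (u i)) \<le> \<kappa>2 w"
    unfolding w_def by (rule classK_mono[OF K2 inp_facts(2)[OF npN u] inp_facts(3)[OF npN u]])
  finally show ?case using P0 Q0 by (simp add: r_def w_def)
qed

lemma iter:
  fixes V :: "(nat \<Rightarrow> nat \<Rightarrow> real) \<Rightarrow> real" and \<alpha> \<gamma> :: "real \<Rightarrow> real"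
  assumes V0: "\<forall>\<xi>\<in>seqsp n nx. 0 \<le> V \<xi>"
    and nn: "\<And>s. 0 \<le> s \<Longrightarrow> 0 \<le> \<alpha> s"
    and mono: "\<And>s t. 0 \<le> s \<Longrightarrow> s \<le> t \<Longrightarrow> \<alpha> s \<le> \<alpha> t"
    and le: "\<And>s. 0 \<le> s \<Longrightarrow> \<alpha> s \<le> s"
    and gK: "classK \<gamma>"
    and step: "\<forall>\<xi>\<in>seqsp n nx. \<forall>u\<in>inp_seqs p np.
                 V (traj (net_map I ff) \<xi> u M) \<le> max (\<alpha> (V \<xi>)) (\<gamma> (linf np u))"
    and xi: "\<xi> \<in> seqsp n nx" and u: "u \<in> inp_seqs p np"
  shows "V (traj (net_map I ff) \<xi> u (j * M)) \<le> max ((\<alpha> ^^ j) (V \<xi>)) (\<gamma> (linf np u))"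
proof (induction j)
  case 0
  then show ?case by simp
next
  case (Suc j)
  define x where "x = traj (net_map I ff) \<xi> u (j * M)"
  define g where "g = \<gamma> (linf np u)"
  have g0: "0 \<le> g" unfolding g_def by (rule classK_nonneg[OF gK inp_facts(4)[OF npN u]])
  have x: "x \<in> seqsp n nx" unfolding x_def by (rule traj_in[OF wp xi u])
  have u': "shift u (j * M) \<in> inp_seqs p np" by (rule inp_facts(5)[OF npN u])
  have "traj (net_map I ff) \<xi> u (Suc j * M) = traj (net_map I ff) x (shift u (j * M)) M"
    using traj_add[of "net_map I ff" \<xi> u M "j * M"] by (simp add: x_def shift_def add.commute)
  then have "V (traj (net_map I ff) \<xi> u (Suc j * M)) \<le> max (\<alpha> (V x)) (\<gamma> (linf np (shift u (j * M))))"
    using step x u' by simp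
  also have "\<gamma> (linf np (shift u (j * M))) \<le> g"
    unfolding g_def by (rule classK_mono[OF gK inp_facts(4)[OF npN u'] inp_facts(6)[OF npN u]])
  also have "\<alpha> (V x) \<le> \<alpha> (max ((\<alpha> ^^ j) (V \<xi>)) g)"
    by (rule mono) (use V0 x Suc in \<open>auto simp: x_def g_def\<close>)
  also have "\<alpha> (max ((\<alpha> ^^ j) (V \<xi>)) g) \<le> max ((\<alpha> ^^ Suc j) (V \<xi>)) g"
  proof (cases "(\<alpha> ^^ j) (V \<xi>) \<le> g")
    case True
    then show ?thesis using le[OF g0] by (simp add: max_def)
  next
    case False
    then show ?thesis by (simp add: max_def)
  qed
  finally show ?case by (simp add: g_def max.assoc)
qed


lemma ISS_part:
  assumes Ly: "fs_ISS_Lyap n nx (inp_seqs p np) (net_map I ff) (setdist nx A) (linf np) V"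
  shows "is_ISS (seqsp n nx) (inp_seqs p np) (net_map I ff) (setdist nx A) (linf np)"
proof -
  obtain M wl wu \<alpha> \<gamma> where V0: "\<forall>\<xi>\<in>seqsp n nx. 0 \<le> V \<xi>" and M1: "M \<ge> 1"
    and wl: "classKinf wl" and wu: "classKinf wu" and al: "classKinf \<alpha>"
    and lt: "\<forall>s>0. \<alpha> s < s" and gK: "classK \<gamma>"
    and L: "\<forall>\<xi>\<in>seqsp n nx. \<forall>u\<in>inp_seqs p np. wl (setdist nx A \<xi>) \<le> V \<xi> \<and> V \<xi> \<le> wu (setdist nx A \<xi>) \<and>
           V (traj (net_map I ff) \<xi> u M) \<le> max (\<alpha> (V \<xi>)) (\<gamma> (linf np u))"
    using Ly unfolding fs_ISS_Lyap_def by blast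
  have aK: "classK \<alpha>" and wuK: "classK wu" and wlK: "classK wl"
    using al wu wl by (auto simp: classKinf_def)
  obtain h where hK: "classK h" and hw: "\<forall>s\<ge>0. h (wl s) = s" and wh: "\<forall>y\<ge>0. wl (h y) = y \<and> h y \<ge> 0"
    using classKinf_inverse[OF wl] by blast
  have ann: "\<And>s. 0 \<le> s \<Longrightarrow> 0 \<le> \<alpha> s" using classK_nonneg[OF aK] .
  have amono: "\<And>s t. 0 \<le> s \<Longrightarrow> s \<le> t \<Longrightarrow> \<alpha> s \<le> \<alpha> t" using classK_mono[OF aK] .
  have ale: "\<And>s. 0 \<le> s \<Longrightarrow> \<alpha> s \<le> s" using classK_below[OF aK lt] .
  define PM where "PM = Pf \<kappa>1 M"
  define QM where "QM = Qf \<kappa>1 \<kappa>2 M"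
  have PK: "classK PM" unfolding PM_def by (rule Pf_K[OF K1])
  have QK: "classK QM" unfolding QM_def by (rule Qf_K[OF K1 K2])
  define B where "B r k = h ((\<alpha> ^^ (k div M)) (wu (2 * PM r)))" for r k
  define c where "c r = h (wu (2 * PM r))" for r
  have P2K: "classK (\<lambda>r. wu (2 * PM r))"
    by (rule classK_comp[OF wuK classK_multc[OF _ PK]]) simp
  have cK: "classK c" unfolding c_def by (rule classK_comp[OF hK P2K])
  have y0: "0 \<le> wu (2 * PM r)" if "0 \<le> r" for r using classK_nonneg[OF P2K that] .
  have Bnn: "0 \<le> B r k" if "0 \<le> r" for r k
    unfolding B_def by (rule classK_nonneg[OF hK fp_nn[of \<alpha>, OF ann y0[OF that]]])
  have Bmono: "B r k \<le> B r' k" if "0 \<le> r" "r \<le> r'" for r r' k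
  proof -
    have "wu (2 * PM r) \<le> wu (2 * PM r')" by (rule classK_mono[OF P2K that])
    then have "(\<alpha> ^^ (k div M)) (wu (2 * PM r)) \<le> (\<alpha> ^^ (k div M)) (wu (2 * PM r'))"
      using fp_mono[of \<alpha>, OF ann amono y0[OF that(1)]] by blast
    moreover have nn: "0 \<le> (\<alpha> ^^ (k div M)) (wu (2 * PM r))" by (rule fp_nn[of \<alpha>, OF ann y0[OF that(1)]])
    ultimately show ?thesis unfolding B_def using classK_mono[OF hK nn] by blast
  qed
  have Bdec: "B r (Suc k) \<le> B r k" if "0 \<le> r" for r k
  proof -
    have "k div M \<le> Suc k div M" by (rule div_le_mono) simp
    then have "(\<alpha> ^^ (Suc k div M)) (wu (2 * PM r)) \<le> (\<alpha> ^^ (k div M)) (wu (2 * PM r))"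
      using fp_decseq[of \<alpha>, OF ann ale y0[OF that]] by blast
    moreover have nn: "0 \<le> (\<alpha> ^^ (Suc k div M)) (wu (2 * PM r))" by (rule fp_nn[of \<alpha>, OF ann y0[OF that]])
    ultimately show ?thesis unfolding B_def using classK_mono[OF hK nn] by blast
  qed
  have Blim: "B r \<longlonglongrightarrow> 0" if "0 \<le> r" for r
  proof -
    have l1: "(\<lambda>j. (\<alpha> ^^ j) (wu (2 * PM r))) \<longlonglongrightarrow> 0" by (rule fp_lim[OF aK lt y0[OF that]])
    have l2: "(\<lambda>k. (\<alpha> ^^ (k div M)) (wu (2 * PM r))) \<longlonglongrightarrow> 0"
      by (rule filterlim_compose[OF l1 filterlim_at_top_div_const_nat]) (use M1 in simp)
    have "(\<lambda>k. h ((\<alpha> ^^ (k div M)) (wu (2 * PM r)))) \<longlonglongrightarrow> h 0"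
      by (rule continuous_on_tendsto_compose[OF classK_cont[OF hK] l2])
         (use fp_nn[of \<alpha>, OF ann y0[OF that]] in auto)
    moreover have "B r = (\<lambda>k. h ((\<alpha> ^^ (k div M)) (wu (2 * PM r))))" by (simp add: B_def fun_eq_iff)
    ultimately show ?thesis using hK by (simp add: classK_def)
  qed
  have Bbnd: "B r k \<le> c r" if "0 \<le> r" for r k
  proof -
    have "(\<alpha> ^^ (k div M)) (wu (2 * PM r)) \<le> wu (2 * PM r)"
      using fp_le[of \<alpha>, OF ann ale y0[OF that]] by blast
    moreover have nn: "0 \<le> (\<alpha> ^^ (k div M)) (wu (2 * PM r))" by (rule fp_nn[of \<alpha>, OF ann y0[OF that]])
    ultimately show ?thesis unfolding B_def c_def using classK_mono[OF hK nn] by blast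
  qed
  obtain \<beta> where bKL: "classKL \<beta>" and bB: "\<forall>r\<ge>0. \<forall>k. B r k \<le> \<beta> r (real k)"
    using KL_bound[of B c, OF Bnn Bmono Bdec Blim Bbnd cK] by blast
  define \<gamma>f where "\<gamma>f w = h (max (wu (2 * QM w)) (\<gamma> w))" for w
  have Q2K: "classK (\<lambda>w. wu (2 * QM w))"
    by (rule classK_comp[OF wuK classK_multc[OF _ QK]]) simp
  have gfK: "classK \<gamma>f" unfolding \<gamma>f_def by (rule classK_comp[OF hK classK_max[OF Q2K gK]])
  have main: "setdist nx A (traj (net_map I ff) \<xi> u k) \<le> max (\<beta> (setdist nx A \<xi>) (real k)) (\<gamma>f (linf np u))"
    if xi: "\<xi> \<in> seqsp n nx" and u: "u \<in> inp_seqs p np" for \<xi> u k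
  proof -
    define r where "r = setdist nx A \<xi>"
    define w where "w = linf np u"
    define j where "j = k div M"
    define q where "q = k mod M"
    have r0: "0 \<le> r" unfolding r_def by (rule dA_nn[OF xi])
    have w0: "0 \<le> w" unfolding w_def by (rule inp_facts(4)[OF npN u])
    define \<xi>' where "\<xi>' = traj (net_map I ff) \<xi> u q"
    define u' where "u' = shift u q"
    have xi': "\<xi>' \<in> seqsp n nx" unfolding \<xi>'_def by (rule traj_in[OF wp xi u])
    have u': "u' \<in> inp_seqs p np" unfolding u'_def by (rule inp_facts(5)[OF npN u])
    have kk: "traj (net_map I ff) \<xi> u k = traj (net_map I ff) \<xi>' u' (j * M)"
    proof -
      have "k = j * M + q" by (simp add: j_def q_def)
      then show ?thesis using traj_add[of "net_map I ff" \<xi> u "j * M" q]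
        by (simp add: \<xi>'_def u'_def shift_def)
    qed
    define xk where "xk = traj (net_map I ff) \<xi> u k"
    have xk: "xk \<in> seqsp n nx" unfolding xk_def by (rule traj_in[OF wp xi u])
    have V1: "V xk \<le> max ((\<alpha> ^^ j) (V \<xi>')) (\<gamma> (linf np u'))"
      unfolding xk_def kk
      by (rule iter[OF V0 ann amono ale gK]) (use L xi' u' in auto)
    have "\<gamma> (linf np u') \<le> \<gamma> w"
      unfolding w_def u'_def by (rule classK_mono[OF gK inp_facts(4)[OF npN u'[unfolded u'_def]] inp_facts(6)[OF npN u]])
    define a1 where "a1 = wu (2 * PM r)"
    define a2 where "a2 = wu (2 * QM w)"
    have a10: "0 \<le> a1" unfolding a1_def by (rule y0[OF r0])
    have a20: "0 \<le> a2" unfolding a2_def by (rule classK_nonneg[OF Q2K w0])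
    have qM: "q \<le> M" using M1 by (simp add: q_def less_imp_le)
    have "setdist nx A \<xi>' \<le> Pf \<kappa>1 q r + Qf \<kappa>1 \<kappa>2 q w"
      unfolding \<xi>'_def r_def w_def by (rule dA_traj[OF xi u])
    also have "\<dots> \<le> PM r + QM w" unfolding PM_def QM_def
      by (intro add_mono Pf_mono[OF K1 r0 qM] Qf_mono[OF K1 K2 w0 qM])
    finally have dxi': "setdist nx A \<xi>' \<le> PM r + QM w" .
    have "V \<xi>' \<le> wu (setdist nx A \<xi>')" using L xi' u' by blast
    also have "\<dots> \<le> wu (PM r + QM w)" by (rule classK_mono[OF wuK dA_nn[OF xi'] dxi'])
    also have "\<dots> \<le> max a1 a2" unfolding a1_def a2_def
      by (rule classK_sum2[OF wuK classK_nonneg[OF PK r0] classK_nonneg[OF QK w0]])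
    finally have Vxi': "V \<xi>' \<le> max a1 a2" .
    have "(\<alpha> ^^ j) (V \<xi>') \<le> (\<alpha> ^^ j) (max a1 a2)"
      by (rule fp_mono[of \<alpha>, OF ann amono]) (use V0 xi' Vxi' in auto)
    also have "\<dots> \<le> max ((\<alpha> ^^ j) a1) a2"
    proof (cases "a1 \<le> a2")
      case True
      then show ?thesis using fp_le[of \<alpha>, OF ann ale a20, of j] by (simp add: max_def)
    next
      case False
      then show ?thesis by (simp add: max_def)
    qed
    finally have "V xk \<le> max ((\<alpha> ^^ j) a1) (max a2 (\<gamma> w))"
      using V1 \<open>\<gamma> (linf np u') \<le> \<gamma> w\<close> by (auto simp: max_def split: if_splits)
    moreover have "wl (setdist nx A xk) \<le> V xk" using L xk u by blast
    ultimately have W: "wl (setdist nx A xk) \<le> max ((\<alpha> ^^ j) a1) (max a2 (\<gamma> w))" by linarith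
    have dk0: "0 \<le> setdist nx A xk" by (rule dA_nn[OF xk])
    have E0: "0 \<le> (\<alpha> ^^ j) a1" by (rule fp_nn[of \<alpha>, OF ann a10])
    have G0: "0 \<le> max a2 (\<gamma> w)" using a20 by simp
    have hle: "setdist nx A xk \<le> h y" if "wl (setdist nx A xk) \<le> y" "0 \<le> y" for y
    proof -
      have "h (wl (setdist nx A xk)) \<le> h y" by (rule classK_mono[OF hK classK_nonneg[OF wlK dk0] that(1)])
      then show ?thesis using hw dk0 by simp
    qed
    show ?thesis
    proof (cases "(\<alpha> ^^ j) a1 \<le> max a2 (\<gamma> w)")
      case True
      then have "setdist nx A xk \<le> h (max a2 (\<gamma> w))" using W G0 by (intro hle) auto
      then show ?thesis by (simp add: xk_def \<gamma>f_def a2_def w_def)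
    next
      case False
      then have "setdist nx A xk \<le> h ((\<alpha> ^^ j) a1)" using W E0 by (intro hle) auto
      also have "h ((\<alpha> ^^ j) a1) = B r k" by (simp add: B_def a1_def j_def)
      also have "\<dots> \<le> \<beta> r (real k)" using bB r0 by blast
      finally show ?thesis by (simp add: xk_def r_def)
    qed
  qed
  show ?thesis unfolding is_ISS_def using bKL gfK main by blast
qed


lemma eISS_part:
  assumes lin: "\<exists>c. \<forall>s\<ge>0. \<kappa>1 s = c * s"
    and Ly: "fs_eISS_Lyap n nx (inp_seqs p np) (net_map I ff) (setdist nx A) (linf np) V"
  shows "is_eISS (seqsp n nx) (inp_seqs p np) (net_map I ff) (setdist nx A) (linf np)"
proof -
  obtain c where cl: "\<forall>s\<ge>0. \<kappa>1 s = c * s" using lin by blast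
  have c0: "0 < c" using classK_pos[OF K1, of 1] cl by simp
  obtain M wl wu b \<kappa> \<gamma> where V0: "\<forall>\<xi>\<in>seqsp n nx. 0 \<le> V \<xi>" and M1: "M \<ge> 1"
    and wl: "wl > 0" and wu: "wu > 0" and b: "b > 0" and k0: "0 \<le> \<kappa>" and k1: "\<kappa> < 1" and gK: "classK \<gamma>"
    and L: "\<forall>\<xi>\<in>seqsp n nx. \<forall>u\<in>inp_seqs p np. wl * setdist nx A \<xi> powr b \<le> V \<xi> \<and> V \<xi> \<le> wu * setdist nx A \<xi> powr b \<and>
           V (traj (net_map I ff) \<xi> u M) \<le> max (\<kappa> * V \<xi>) (\<gamma> (linf np u))"
    using Ly unfolding fs_eISS_Lyap_def by blast
  define \<alpha> where "\<alpha> s = \<kappa> * s" for s :: real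
  have ann: "\<And>s. 0 \<le> s \<Longrightarrow> 0 \<le> \<alpha> s" using k0 by (simp add: \<alpha>_def)
  have amono: "\<And>s t. 0 \<le> s \<Longrightarrow> s \<le> t \<Longrightarrow> \<alpha> s \<le> \<alpha> t" using k0 by (simp add: \<alpha>_def mult_left_mono)
  have ale: "\<And>s. 0 \<le> s \<Longrightarrow> \<alpha> s \<le> s" using k1 by (simp add: \<alpha>_def mult_left_le_one_le k0)
  have fa: "(\<alpha> ^^ j) s = \<kappa> ^ j * s" for j s
    using funpow_lin[where k=\<kappa> and j=j and s=s] by (simp add: \<alpha>_def[abs_def])
  define \<kappa>' where "\<kappa>' = max \<kappa> (1/2)"
  have k'0: "0 < \<kappa>'" and k'1: "\<kappa>' < 1" and kk': "\<kappa> \<le> \<kappa>'" using k1 by (auto simp: \<kappa>'_def)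
  define D where "D = (1 + 2 * c) ^ M"
  have D0: "0 < D" using c0 by (simp add: D_def)
  define QM where "QM = Qf \<kappa>1 \<kappa>2 M"
  have QK: "classK QM" unfolding QM_def by (rule Qf_K[OF K1 K2])
  define \<rho>0 where "\<rho>0 = \<kappa>' powr (1 / b)"
  define \<rho> where "\<rho> = \<rho>0 powr (1 / real M)"
  have r00: "0 < \<rho>0" using k'0 by (simp add: \<rho>0_def)
  have r01: "\<rho>0 < 1" unfolding \<rho>0_def using k'0 k'1 b
    by (metis divide_pos_pos powr_less_mono2 powr_one_eq_one zero_less_one less_imp_le)
  have rr0: "0 < \<rho>" using r00 by (simp add: \<rho>_def)
  have rr1: "\<rho> < 1" unfolding \<rho>_def using r00 r01 M1
    by (metis divide_pos_pos of_nat_0_less_iff powr_less_mono2 powr_one_eq_one zero_less_one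
        less_imp_le le_less_trans less_one not_le)
  define Kc where "Kc = (wu / wl) powr (1 / b) * (2 * D)"
  have Kc0: "0 \<le> Kc" using D0 by (simp add: Kc_def)
  define C where "C = max 1 (Kc / \<rho>0)"
  define G where "G w = max (wu * (2 * QM w) powr b) (\<gamma> w)" for w
  define \<gamma>f where "\<gamma>f w = ((1 / wl) * G w) powr (1 / b)" for w
  have GK: "classK G" unfolding G_def
    by (intro classK_max gK classK_multc[OF wu] classK_comp[OF classK_powr[OF b]] classK_multc[OF _ QK]) simp
  have gfK: "classK \<gamma>f" unfolding \<gamma>f_def
    by (rule classK_comp[OF classK_powr classK_multc[OF _ GK]]) (use b wl in auto)
  have main: "setdist nx A (traj (net_map I ff) \<xi> u k) \<le> max (C * \<rho> ^ k * setdist nx A \<xi>) (\<gamma>f (linf np u))"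
    if xi: "\<xi> \<in> seqsp n nx" and u: "u \<in> inp_seqs p np" for \<xi> u k
  proof -
    define r where "r = setdist nx A \<xi>"
    define w where "w = linf np u"
    define j where "j = k div M"
    define q where "q = k mod M"
    have r0: "0 \<le> r" unfolding r_def by (rule dA_nn[OF xi])
    have w0: "0 \<le> w" unfolding w_def by (rule inp_facts(4)[OF npN u])
    define \<xi>' where "\<xi>' = traj (net_map I ff) \<xi> u q"
    define u' where "u' = shift u q"
    have xi': "\<xi>' \<in> seqsp n nx" unfolding \<xi>'_def by (rule traj_in[OF wp xi u])
    have u': "u' \<in> inp_seqs p np" unfolding u'_def by (rule inp_facts(5)[OF npN u])
    have kk: "traj (net_map I ff) \<xi> u k = traj (net_map I ff) \<xi>' u' (j * M)"
    proof -
      have "k = j * M + q" by (simp add: j_def q_def)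
      then show ?thesis using traj_add[of "net_map I ff" \<xi> u "j * M" q]
        by (simp add: \<xi>'_def u'_def shift_def)
    qed
    define xk where "xk = traj (net_map I ff) \<xi> u k"
    have xk: "xk \<in> seqsp n nx" unfolding xk_def by (rule traj_in[OF wp xi u])
    have V1: "V xk \<le> max (\<kappa> ^ j * V \<xi>') (\<gamma> (linf np u'))"
    proof -
      have "V xk \<le> max ((\<alpha> ^^ j) (V \<xi>')) (\<gamma> (linf np u'))"
        unfolding xk_def kk
        by (rule iter[OF V0 ann amono ale gK]) (use L xi' u' in \<open>auto simp: \<alpha>_def\<close>)
      then show ?thesis by (simp add: fa)
    qed
    have gw: "\<gamma> (linf np u') \<le> \<gamma> w"
      unfolding w_def u'_def by (rule classK_mono[OF gK inp_facts(4)[OF npN u'[unfolded u'_def]] inp_facts(6)[OF npN u]])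
    define a1 where "a1 = wu * (2 * (D * r)) powr b"
    define a2 where "a2 = wu * (2 * QM w) powr b"
    have a10: "0 \<le> a1" unfolding a1_def using wu by simp
    have a20: "0 \<le> a2" unfolding a2_def using wu by simp
    have qM: "q \<le> M" using M1 by (simp add: q_def less_imp_le)
    have "setdist nx A \<xi>' \<le> Pf \<kappa>1 q r + Qf \<kappa>1 \<kappa>2 q w"
      unfolding \<xi>'_def r_def w_def by (rule dA_traj[OF xi u])
    also have "\<dots> \<le> Pf \<kappa>1 M r + QM w" unfolding QM_def
      by (intro add_mono Pf_mono[OF K1 r0 qM] Qf_mono[OF K1 K2 w0 qM])
    also have "Pf \<kappa>1 M r = D * r" unfolding D_def by (rule Pf_lin[OF cl r0 K1])
    finally have dxi': "setdist nx A \<xi>' \<le> D * r + QM w" .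
    have Dr0: "0 \<le> D * r" using D0 r0 by simp
    have Q0: "0 \<le> QM w" using classK_nonneg[OF QK w0] .
    have "V \<xi>' \<le> wu * setdist nx A \<xi>' powr b" using L xi' u' by blast
    also have "\<dots> \<le> wu * (D * r + QM w) powr b"
      using wu b dA_nn[OF xi'] dxi' by (intro mult_left_mono powr_mono2) auto
    also have "(D * r + QM w) powr b \<le> max ((2 * (D * r)) powr b) ((2 * QM w) powr b)"
      by (rule classK_sum2[OF classK_powr[OF b] Dr0 Q0])
    finally have Vxi': "V \<xi>' \<le> max a1 a2"
      using wu unfolding a1_def a2_def by (auto simp: max_def mult_left_mono split: if_splits)
    have kj0: "0 \<le> \<kappa> ^ j" using k0 by simp
    have kj1: "\<kappa> ^ j \<le> 1" using k0 k1 by (simp add: power_le_one)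
    have "\<kappa> ^ j * V \<xi>' \<le> \<kappa> ^ j * max a1 a2" by (rule mult_left_mono[OF Vxi' kj0])
    also have "\<dots> \<le> max (\<kappa> ^ j * a1) a2"
    proof (cases "a1 \<le> a2")
      case True
      then show ?thesis using kj1 a20 mult_left_le_one_le[OF a20 kj0 kj1] by (simp add: max_def)
    next
      case False
      then show ?thesis by (simp add: max_def)
    qed
    finally have "V xk \<le> max (\<kappa> ^ j * a1) (G w)"
      using V1 gw by (auto simp: max_def G_def a2_def split: if_splits)
    moreover have "wl * setdist nx A xk powr b \<le> V xk" using L xk u by blast
    ultimately have W: "wl * setdist nx A xk powr b \<le> max (\<kappa> ^ j * a1) (G w)" by linarith
    define dk where "dk = setdist nx A xk"
    have dk0: "0 \<le> dk" unfolding dk_def by (rule dA_nn[OF xk])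
    have dkb: "dk = (dk powr b) powr (1 / b)" using powr_inv_b[OF dk0 b] by simp
    have hle: "dk \<le> Y powr (1 / b)" if "dk powr b \<le> Y" for Y
    proof -
      have "(dk powr b) powr (1 / b) \<le> Y powr (1 / b)" using that b by (intro powr_mono2) auto
      then show ?thesis using dkb by simp
    qed
    show ?thesis
    proof (cases "\<kappa> ^ j * a1 \<le> G w")
      case True
      then have "wl * dk powr b \<le> G w" using W by (simp add: dk_def)
      then have "dk powr b \<le> (1 / wl) * G w" using wl by (simp add: field_simps)
      then have "dk \<le> \<gamma>f w" unfolding \<gamma>f_def by (rule hle)
      then show ?thesis by (simp add: dk_def xk_def w_def)
    next
      case False
      then have "wl * dk powr b \<le> \<kappa> ^ j * a1" using W by (simp add: dk_def)
      also have "\<dots> \<le> \<kappa>' ^ j * a1" using a10 k0 kk' by (intro mult_right_mono power_mono) auto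
      finally have "dk powr b \<le> \<kappa>' ^ j * (wu / wl) * (2 * (D * r)) powr b"
        using wl by (simp add: field_simps a1_def)
      then have "dk \<le> (\<kappa>' ^ j * (wu / wl) * (2 * (D * r)) powr b) powr (1 / b)" by (rule hle)
      also have "\<dots> = (\<kappa>' ^ j) powr (1 / b) * (wu / wl) powr (1 / b) * (2 * (D * r))"
      proof -
        have "(\<kappa>' ^ j * (wu / wl) * (2 * (D * r)) powr b) powr (1 / b)
            = (\<kappa>' ^ j) powr (1 / b) * (wu / wl) powr (1 / b) * ((2 * (D * r)) powr b) powr (1 / b)"
          by (simp only: powr_mult)
        also have "((2 * (D * r)) powr b) powr (1 / b) = 2 * (D * r)"
          using powr_inv_b[of "2 * (D * r)" b] Dr0 b by simp
        finally show ?thesis .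
      qed
      also have "(\<kappa>' ^ j) powr (1 / b) = \<rho>0 ^ j"
        unfolding \<rho>0_def using k'0
        by (simp add: powr_realpow[symmetric] powr_powr mult.commute)
      finally have d1: "dk \<le> \<rho>0 ^ j * Kc * r" by (simp add: Kc_def mult.assoc mult.left_commute)
      have "\<rho>0 ^ Suc j \<le> \<rho> ^ k"
      proof -
        have Mpos: "0 < real M" using M1 by simp
        have "real k / real M \<le> real (Suc j)"
        proof -
          have "q < M" using M1 by (simp add: q_def)
          moreover have "k = j * M + q" by (simp add: j_def q_def)
          ultimately have "k < Suc j * M" by simp
          then have "real k \<le> real (Suc j) * real M" by (metis less_imp_le of_nat_le_iff of_nat_mult)
          then show ?thesis using Mpos by (simp add: divide_le_eq)
        qed
        then have "\<rho>0 powr real (Suc j) \<le> \<rho>0 powr (real k / real M)"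
          by (rule powr_base_lt1_anti[OF r00 r01])
        moreover have "\<rho>0 powr real (Suc j) = \<rho>0 ^ Suc j" by (rule powr_realpow[OF r00])
        moreover have "\<rho>0 powr (real k / real M) = \<rho> ^ k"
          unfolding \<rho>_def using r00 by (simp add: powr_realpow[symmetric] powr_powr)
        ultimately show ?thesis by simp
      qed
      then have "\<rho>0 ^ j \<le> \<rho> ^ k / \<rho>0" using r00 by (simp add: le_divide_eq mult.commute)
      then have "\<rho>0 ^ j * Kc * r \<le> \<rho> ^ k / \<rho>0 * Kc * r"
        using Kc0 r0 by (intro mult_right_mono) auto
      also have "\<dots> = (Kc / \<rho>0) * \<rho> ^ k * r" by simp
      also have "\<dots> \<le> C * \<rho> ^ k * r"
        unfolding C_def using rr0 r0 by (intro mult_right_mono) auto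
      finally show ?thesis using d1 by (simp add: dk_def xk_def r_def)
    qed
  qed
  have C1: "C \<ge> 1" by (simp add: C_def)
  show ?thesis unfolding is_eISS_def
    using C1 rr0 rr1 gfK main by (intro exI[of _ C] exI[of _ \<rho>] exI[of _ \<gamma>f]) auto
qed

end

theorem proposition2:
  fixes n p :: "nat \<Rightarrow> nat"
    and nx np :: "nat \<Rightarrow> (nat \<Rightarrow> real) \<Rightarrow> real"
    and I :: "nat \<Rightarrow> nat set"
    and ff :: "nat \<Rightarrow> (nat \<Rightarrow> real) \<Rightarrow> (nat \<Rightarrow> nat \<Rightarrow> real) \<Rightarrow> (nat \<Rightarrow> real) \<Rightarrow> (nat \<Rightarrow> real)"
    and A :: "(nat \<Rightarrow> nat \<Rightarrow> real) set"
    and \<kappa>1 \<kappa>2 :: "real \<Rightarrow> real"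
  assumes setting: "network_setting n p nx np I ff"
    and wp: "well_posed n p nx np I ff"
    and A_sub: "A \<subseteq> seqsp n nx" and A_ne: "A \<noteq> {}" and A_closed: "closed_in_seqsp n nx A"
    and K1: "classK \<kappa>1" and K2: "classK \<kappa>2"
    and Kbdd: "\<forall>\<xi>\<in>seqsp n nx. \<forall>\<mu>\<in>seqsp p np.
                 setdist nx A (net_map I ff \<xi> \<mu>) \<le> \<kappa>1 (setdist nx A \<xi>) + \<kappa>2 (supn np \<mu>)"
  shows "((\<exists>V. fs_ISS_Lyap n nx (inp_seqs p np) (net_map I ff) (setdist nx A) (linf np) V)
            \<longrightarrow> is_ISS (seqsp n nx) (inp_seqs p np) (net_map I ff) (setdist nx A) (linf np))
       \<and> (((\<exists>c. \<forall>s\<ge>0. \<kappa>1 s = c * s) \<and>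
            (\<exists>V. fs_eISS_Lyap n nx (inp_seqs p np) (net_map I ff) (setdist nx A) (linf np) V))
            \<longrightarrow> is_eISS (seqsp n nx) (inp_seqs p np) (net_map I ff) (setdist nx A) (linf np))"
proof (intro conjI impI)
  assume "\<exists>V. fs_ISS_Lyap n nx (inp_seqs p np) (net_map I ff) (setdist nx A) (linf np) V"
  then obtain V where "fs_ISS_Lyap n nx (inp_seqs p np) (net_map I ff) (setdist nx A) (linf np) V" by blast
  then show "is_ISS (seqsp n nx) (inp_seqs p np) (net_map I ff) (setdist nx A) (linf np)"
    by (rule ISS_part[OF setting wp A_sub A_ne K1 K2 Kbdd])
next
  assume as: "(\<exists>c. \<forall>s\<ge>0. \<kappa>1 s = c * s) \<and>
            (\<exists>V. fs_eISS_Lyap n nx (inp_seqs p np) (net_map I ff) (setdist nx A) (linf np) V)"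
  then obtain V where "fs_eISS_Lyap n nx (inp_seqs p np) (net_map I ff) (setdist nx A) (linf np) V" by blast
  then show "is_eISS (seqsp n nx) (inp_seqs p np) (net_map I ff) (setdist nx A) (linf np)"
    using eISS_part[OF setting wp A_sub A_ne K1 K2 Kbdd] as by blast
qed

end
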